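(* Let $N\ge3$ be an integer and $s\in\mathbb{R}$. Define $H=H_{int}^N(s)=(h_1,\dots,h_N)$ by $h_1=s$, $h_{n+2}=(s^2-1)s^n$ for $n=0,1,\dots,N-3$, and $h_N=-s^{N-2}$ (with $s^0=1$). Then the aperiodic auto-correlation $A_d=\sum_i h_ih_{i+d}$ (with $h_k=0$ for $k\notin\{1,\dots,N\}$) satisfies $A_0=1+s^{2N-2}$, $A_{N-1}=A_{-(N-1)}=-s^{N-1}$, and $A_d=0$ for all $0<|d|<N-1$. In particular, for integer $s$ the array is integer-valued. *)

theory Defs
  imports Complex_Main
begin

definition hint :: "nat \<Rightarrow> real \<Rightarrow> int \<Rightarrow> real" where
  "hint N s k =
     (if k = 1 then s
      else if 2 \<le> k \<and> k \<le> int N - 1 then (s\<^sup>2 - 1) * s ^ nat (k - 2)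
      else if k = int N then - (s ^ (N - 2))
      else 0)"

definition acorr :: "nat \<Rightarrow> (int \<Rightarrow> real) \<Rightarrow> int \<Rightarrow> real" where
  "acorr N h d = (\<Sum>i\<in>{1..int N}. h i * h (i + d))"

end

theory Submission
  imports Defs
begin

lemma sum_int_nat: "(\<Sum>i\<in>{1..int m}. f i) = (\<Sum>k<m. f (int k + 1))"
proof (induction m)
  case 0 then show ?case by simp
next
  case (Suc m)
  have "{1..int (Suc m)} = insert (int m + 1) {1..int m}" by auto
  then show ?case using Suc by (simp add: add.commute)
qed

lemma geom: "((s::real)\<^sup>2 - 1) * (\<Sum>k<n. s ^ (2*k)) = s ^ (2*n) - 1"
  by (induction n) (auto simp: algebra_simps power_add power2_eq_square mult_2)

lemma hint_zero1: "N \<ge> 1 \<Longrightarrow> k < 1 \<Longrightarrow> hint N s k = 0"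
  by (auto simp: hint_def)
lemma hint_zero2: "N \<ge> 1 \<Longrightarrow> k > int N \<Longrightarrow> hint N s k = 0"
  by (auto simp: hint_def)
lemmas hint_zero = hint_zero1 hint_zero2

lemma restrict:
  assumes "d \<le> N" "N \<ge> 1"
  shows "acorr N (hint N s) (int d) = (\<Sum>k<N-d. hint N s (int k + 1) * hint N s (int k + 1 + int d))"
proof -
  have "acorr N (hint N s) (int d) = (\<Sum>i\<in>{1..int (N-d)}. hint N s i * hint N s (i + int d))"
    unfolding acorr_def
    by (rule sum.mono_neutral_right) (use assms in \<open>auto simp: hint_zero of_nat_diff\<close>)
  then show ?thesis by (simp add: sum_int_nat)
qed

lemma symm:
  assumes "N \<ge> 1"
  shows "acorr N (hint N s) (- int d) = acorr N (hint N s) (int d)"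
proof -
  have "acorr N (hint N s) (- int d) = (\<Sum>i\<in>{1 + int d..int N}. hint N s i * hint N s (i + - int d))"
    unfolding acorr_def
    by (rule sum.mono_neutral_right) (use assms in \<open>auto simp: hint_zero\<close>)
  also have "\<dots> = (\<Sum>j\<in>{1..int N - int d}. hint N s (j + int d) * hint N s j)"
    by (rule sum.reindex_bij_witness[of _ "\<lambda>j. j + int d" "\<lambda>i. i - int d"]) auto
  also have "\<dots> = (\<Sum>j\<in>{1..int N - int d}. hint N s j * hint N s (j + int d))"
    by (simp add: mult.commute)
  also have "\<dots> = acorr N (hint N s) (int d)"
    unfolding acorr_def
    by (rule sum.mono_neutral_left) (use assms in \<open>auto simp: hint_zero mult.commute\<close>)
  finally show ?thesis .
qed

lemma hint_one: "hint N s 1 = s" by (simp add: hint_def)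
lemma hint_mid: "2 \<le> k \<Longrightarrow> k \<le> int N - 1 \<Longrightarrow> hint N s k = (s\<^sup>2 - 1) * s ^ nat (k - 2)"
  by (simp add: hint_def)
lemma hint_last: "N \<ge> 2 \<Longrightarrow> hint N s (int N) = - (s ^ (N - 2))"
  by (simp add: hint_def)

lemma corr_pos:
  assumes "1 \<le> d" "d + 2 \<le> N"
  shows "acorr N (hint N s) (int d) = 0"
proof -
  define n where "n = N - d - 2"
  have n: "N = n + d + 2" using assms(2) n_def by simp
  obtain e where e: "d = Suc e" using assms(1) by (cases d) auto
  have m: "N - d = Suc (Suc n)" using n by simp
  let ?g = "\<lambda>k. hint N s (int k + 1) * hint N s (int k + 1 + int d)"
  have split: "(\<Sum>k<Suc (Suc n). ?g k) = ?g 0 + (\<Sum>k<n. ?g (Suc k)) + ?g (Suc n)"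
    by (subst sum.lessThan_Suc_shift) (simp only: sum.lessThan_Suc add.assoc)
  have g0: "?g 0 = (s\<^sup>2 - 1) * s ^ d"
  proof -
    have h2: "hint N s (int 0 + 1 + int d) = (s\<^sup>2 - 1) * s ^ e"
    proof -
      have "hint N s (int 0 + 1 + int d) = (s\<^sup>2 - 1) * s ^ nat (int 0 + 1 + int d - 2)"
        by (rule hint_mid) (use n e in simp_all)
      also have "nat (int 0 + 1 + int d - 2) = e" using e by simp
      finally show ?thesis .
    qed
    have "?g 0 = s * ((s\<^sup>2 - 1) * s ^ e)" using h2 hint_one[of N s] by simp
    also have "\<dots> = (s\<^sup>2 - 1) * s ^ d" using e by simp
    finally show ?thesis .
  qed
  have gm: "(\<Sum>k<n. ?g (Suc k)) = (\<Sum>k<n. (s\<^sup>2 - 1) * s ^ d * ((s\<^sup>2 - 1) * s ^ (2*k)))"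
  proof (rule sum.cong)
    fix k assume "k \<in> {..<n}"
    then have k: "k < n" by simp
    have h1: "hint N s (int (Suc k) + 1) = (s\<^sup>2 - 1) * s ^ k"
    proof -
      have "hint N s (int (Suc k) + 1) = (s\<^sup>2 - 1) * s ^ nat (int (Suc k) + 1 - 2)"
        by (rule hint_mid) (use n k in simp_all)
      also have "nat (int (Suc k) + 1 - 2) = k" by simp
      finally show ?thesis .
    qed
    have h2: "hint N s (int (Suc k) + 1 + int d) = (s\<^sup>2 - 1) * s ^ (k + d)"
    proof -
      have "hint N s (int (Suc k) + 1 + int d) = (s\<^sup>2 - 1) * s ^ nat (int (Suc k) + 1 + int d - 2)"
        by (rule hint_mid) (use n k in simp_all)
      also have "nat (int (Suc k) + 1 + int d - 2) = k + d" by simp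
      finally show ?thesis .
    qed
    have "?g (Suc k) = ((s\<^sup>2 - 1) * s ^ k) * ((s\<^sup>2 - 1) * s ^ (k + d))"
      using h1 h2 by simp
    also have "\<dots> = (s\<^sup>2 - 1) * s ^ d * ((s\<^sup>2 - 1) * s ^ (2*k))"
      unfolding mult_2 power_add by (simp add: mult_ac)
    finally show "?g (Suc k) = (s\<^sup>2 - 1) * s ^ d * ((s\<^sup>2 - 1) * s ^ (2*k))" .
  qed simp
  have gm2: "\<dots> = (s\<^sup>2 - 1) * s ^ d * (s ^ (2*n) - 1)"
    by (simp only: sum_distrib_left[symmetric] geom)
  have gl: "?g (Suc n) = - ((s\<^sup>2 - 1) * s ^ (2*n + d))"
  proof -
    have h1: "hint N s (int (Suc n) + 1) = (s\<^sup>2 - 1) * s ^ n"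
    proof -
      have "hint N s (int (Suc n) + 1) = (s\<^sup>2 - 1) * s ^ nat (int (Suc n) + 1 - 2)"
        by (rule hint_mid) (use n e in simp_all)
      also have "nat (int (Suc n) + 1 - 2) = n" by simp
      finally show ?thesis .
    qed
    have b: "int (Suc n) + 1 + int d = int N" using n by simp
    have c: "N - 2 = n + d" using n by simp
    have h2: "hint N s (int (Suc n) + 1 + int d) = - (s ^ (n + d))"
      unfolding b using hint_last[of N s] n c by simp
    have "?g (Suc n) = ((s\<^sup>2 - 1) * s ^ n) * (- (s ^ (n + d)))" using h1 h2 by simp
    also have "\<dots> = - ((s\<^sup>2 - 1) * s ^ (2*n + d))"
      unfolding mult_2 power_add by (simp add: mult_ac)
    finally show ?thesis .
  qed
  have fin: "(s\<^sup>2 - 1) * s ^ d + (s\<^sup>2 - 1) * s ^ d * (s ^ (2*n) - 1) + - ((s\<^sup>2 - 1) * s ^ (2*n + d)) = 0"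
    by (simp add: power_add algebra_simps)
  have "acorr N (hint N s) (int d) = (\<Sum>k<Suc (Suc n). ?g k)"
    using restrict[of d N s] m assms by simp
  also have "\<dots> = 0" unfolding split g0 gm gm2 gl using fin .
  finally show ?thesis .
qed

lemma corr0:
  assumes "N \<ge> 3"
  shows "acorr N (hint N s) 0 = 1 + s ^ (2 * N - 2)"
proof -
  define n where "n = N - 2"
  have n: "N = n + 2" using assms n_def by simp
  let ?g = "\<lambda>k. hint N s (int k + 1) * hint N s (int k + 1 + int 0)"
  have m: "N - 0 = Suc (Suc n)" using n by simp
  have split: "(\<Sum>k<Suc (Suc n). ?g k) = ?g 0 + (\<Sum>k<n. ?g (Suc k)) + ?g (Suc n)"
    by (subst sum.lessThan_Suc_shift) (simp only: sum.lessThan_Suc add.assoc)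
  have g0: "?g 0 = s\<^sup>2"
    using hint_one[of N s] by (simp add: power2_eq_square)
  have gm: "(\<Sum>k<n. ?g (Suc k)) = (\<Sum>k<n. (s\<^sup>2 - 1) * ((s\<^sup>2 - 1) * s ^ (2*k)))"
  proof (rule sum.cong)
    fix k assume "k \<in> {..<n}"
    then have k: "k < n" by simp
    have h1: "hint N s (int (Suc k) + 1) = (s\<^sup>2 - 1) * s ^ k"
    proof -
      have "hint N s (int (Suc k) + 1) = (s\<^sup>2 - 1) * s ^ nat (int (Suc k) + 1 - 2)"
        by (rule hint_mid) (use n k in simp_all)
      also have "nat (int (Suc k) + 1 - 2) = k" by simp
      finally show ?thesis .
    qed
    have "?g (Suc k) = ((s\<^sup>2 - 1) * s ^ k) * ((s\<^sup>2 - 1) * s ^ k)"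
      using h1 by simp
    also have "\<dots> = (s\<^sup>2 - 1) * ((s\<^sup>2 - 1) * s ^ (2*k))"
      unfolding mult_2 power_add by (simp add: mult_ac)
    finally show "?g (Suc k) = (s\<^sup>2 - 1) * ((s\<^sup>2 - 1) * s ^ (2*k))" .
  qed simp
  have gm2: "\<dots> = (s\<^sup>2 - 1) * (s ^ (2*n) - 1)"
    by (simp only: sum_distrib_left[symmetric] geom)
  have gl: "?g (Suc n) = s ^ (2*n)"
  proof -
    have b: "int (Suc n) + 1 + int 0 = int N" "int (Suc n) + 1 = int N" using n by simp_all
    have h2: "hint N s (int N) = - (s ^ n)"
      using hint_last[of N s] n by simp
    show ?thesis unfolding b mult_2 power_add by (simp add: h2)
  qed
  have fin: "s\<^sup>2 + (s\<^sup>2 - 1) * (s ^ (2*n) - 1) + s ^ (2*n) = 1 + s ^ (2 * N - 2)"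
  proof -
    have "2 * N - 2 = 2 * n + 2" using n by simp
    then have e: "s ^ (2 * N - 2) = s ^ (2*n) * s\<^sup>2" by (simp only: power_add)
    show ?thesis unfolding e by (simp add: algebra_simps)
  qed
  have "acorr N (hint N s) 0 = (\<Sum>k<Suc (Suc n). ?g k)"
    using restrict[of 0 N s] m assms by simp
  also have "\<dots> = 1 + s ^ (2 * N - 2)" unfolding split g0 gm gm2 gl using fin .
  finally show ?thesis .
qed

lemma corrN:
  assumes "N \<ge> 3"
  shows "acorr N (hint N s) (int N - 1) = - (s ^ (N - 1))"
proof -
  have d: "int N - 1 = int (N - 1)" using assms by simp
  have m: "N - (N - 1) = 1" using assms by simp
  have r: "acorr N (hint N s) (int (N-1)) = (\<Sum>k<1. hint N s (int k + 1) * hint N s (int k + 1 + int (N - 1)))"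
    using restrict[of "N-1" N s] assms unfolding m by simp
  have e: "int 0 + 1 + int (N - 1) = int N" using assms by simp
  have "acorr N (hint N s) (int (N-1)) = hint N s 1 * hint N s (int N)"
    unfolding r e[symmetric] by simp
  also have "\<dots> = s * (- (s ^ (N-2)))" using hint_one[of N s] hint_last[of N s] assms by simp
  also have "\<dots> = - (s ^ (N - 1))"
  proof -
    have "N - 1 = Suc (N - 2)" using assms by simp
    then show ?thesis by simp
  qed
  finally show ?thesis unfolding d .
qed

theorem mainTheorem8:
  fixes N :: nat and s :: real
  assumes "N \<ge> 3"
  shows "acorr N (hint N s) 0 = 1 + s ^ (2 * N - 2) \<and>
     acorr N (hint N s) (int N - 1) = - (s ^ (N - 1)) \<and>
     acorr N (hint N s) (- (int N - 1)) = - (s ^ (N - 1)) \<and>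
     (\<forall>d::int. 0 < \<bar>d\<bar> \<and> \<bar>d\<bar> < int N - 1 \<longrightarrow> acorr N (hint N s) d = 0) \<and>
     (s \<in> \<int> \<longrightarrow> (\<forall>k. hint N s k \<in> \<int>))"
proof (intro conjI allI impI)
  show "acorr N (hint N s) 0 = 1 + s ^ (2 * N - 2)" by (rule corr0[OF assms])
  show "acorr N (hint N s) (int N - 1) = - (s ^ (N - 1))" by (rule corrN[OF assms])
  show "acorr N (hint N s) (- (int N - 1)) = - (s ^ (N - 1))"
    using corrN[OF assms, of s] symm[of N s "N-1"] assms by (simp add: of_nat_diff)
  fix d :: int
  assume h: "0 < \<bar>d\<bar> \<and> \<bar>d\<bar> < int N - 1"
  show "acorr N (hint N s) d = 0"
  proof (cases "d > 0")
    case True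
    define e where "e = nat d"
    have "d = int e" using True e_def by simp
    then show ?thesis using corr_pos[of e N s] h by simp
  next
    case False
    define e where "e = nat (- d)"
    have "d = - int e" using False e_def by simp
    then show ?thesis using corr_pos[of e N s] symm[of N s e] h assms by simp
  qed
next
  fix k assume "s \<in> \<int>"
  then show "hint N s k \<in> \<int>" unfolding hint_def
    by (auto intro!: Ints_minus Ints_mult Ints_power Ints_diff)
qed

end
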